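(* Let $n\ge1$, $\varphi\in L^2([0,1])$, $\Phi(x)=\int_0^x\varphi(t)\,dt$, and $f\colon[0,1]^n\to\mathbb{R}$, $f(\mathbf{x})=\prod_{i=1}^n\varphi(x_i)$. Then for every $k\in\{1,\ldots,n\}$, $$I(f,k)=\begin{cases}\Phi(1)^n\int_0^1 D_z h(z;k+1,n-k+2)\big|_{z=\Phi(y)/\Phi(1)}\,dy, & \text{if } \Phi(1)\ne0,\\[1ex] (-1)^{n-k+1}(n+1)\,\dfrac{\Gamma(n+3)}{\Gamma(k+1)\,\Gamma(n-k+2)}\int_0^1\Phi(y)^n\,dy, & \text{if } \Phi(1)=0,\end{cases}$$ where $h(z;a,b)=z^{a-1}(1-z)^{b-1}/B(a,b)$ is the beta density with parameters $a,b$ and $D_z$ denotes derivative with respect to $z$.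
   Context: For $\mathbf{x}\in[0,1]^n$, $x_{(1)}\le\cdots\le x_{(n)}$ are its coordinates in ascending order, with $x_{(0)}=0$, $x_{(n+1)}=1$. The influence index of a square integrable $f$ on $[0,1]^n$ is $I(f,k)=-(n+1)(n+2)\int_{[0,1]^n}f(\mathbf{x})\,\big(x_{(k+1)}-2x_{(k)}+x_{(k-1)}\big)\,d\mathbf{x}$. $B$ is the beta function and $\Gamma$ the gamma function. *)

theory Defs
  imports "HOL-Analysis.Analysis"
begin

text \<open>Points of [0,1]^n are functions x :: nat => real, with coordinates x 0, ..., x (n-1).\<close>

definition order_stat :: "nat \<Rightarrow> (nat \<Rightarrow> real) \<Rightarrow> nat \<Rightarrow> real" where
  "order_stat n x k =
     (if k = 0 then 0 else if k \<le> n then sort (map x [0..<n]) ! (k - 1) else 1)"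

definition unit_cube :: "nat \<Rightarrow> (nat \<Rightarrow> real) measure" where
  "unit_cube n = PiM {..<n} (\<lambda>_. restrict_space lborel {0..1::real})"

definition influence_index :: "nat \<Rightarrow> ((nat \<Rightarrow> real) \<Rightarrow> real) \<Rightarrow> nat \<Rightarrow> real" where
  "influence_index n f k =
     - (real n + 1) * (real n + 2) *
       (\<integral>x. f x * (order_stat n x (k + 1) - 2 * order_stat n x k + order_stat n x (k - 1))
          \<partial>unit_cube n)"

text \<open>Beta density h(z;a,b) = z^(a-1) (1-z)^(b-1) / B(a,b), for positive integer parameters
  (the only case needed); as a polynomial formula it is defined for all real z.\<close>
definition beta_density :: "nat \<Rightarrow> nat \<Rightarrow> real \<Rightarrow> real" where
  "beta_density a b z = z ^ (a - 1) * (1 - z) ^ (b - 1) / Beta (real a) (real b)"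

end

theory Submission
  imports Defs
begin

lemma Gamma_nat1: "Gamma (real j + 1) = fact j"
  using Gamma_fact[of j] by (simp add: add.commute)

lemma aux: "a \<noteq> 0 \<Longrightarrow> X \<noteq> 0 \<Longrightarrow> (a::real) / (a * X / F) = F / X"
  by (cases "F = 0") (simp_all add: field_simps)

lemma beta_deriv:
  assumes "1 \<le> k" "k \<le> n"
  shows "deriv (beta_density (k+1) (n-k+2)) z =
    (real n+1)*(real n+2)*(real (n choose (k-1)) * z^(k-1)*(1-z)^(n-k+1)
       - real (n choose k) * z^k*(1-z)^(n-k))"
proof -
  obtain m where k: "k = Suc m" using assms by (cases k) auto
  obtain p where nn: "n = Suc m + p" using assms k le_iff_add by blast
  define B where "B = Beta (real (Suc m + 1)) (real (p + 2))"
  have f3: "(fact (n + 2) :: real) = (real n + 2) * (real n+1) * fact n"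
    by (simp add: numeral_2_eq_2 fact_Suc algebra_simps)
  have B: "B = fact (Suc m) * fact (Suc p) / fact (n+2)"
  proof -
    have "real (Suc m + 1) + real (p+2) = real (n+2) + 1" by (simp add: nn)
    moreover have "real (p+2) = real (Suc p) + 1" by simp
    moreover have "real (Suc m + 1) = real (Suc m) + 1" by simp
    ultimately show ?thesis
      unfolding B_def Beta_def by (simp only: Gamma_nat1)
  qed
  have Bpos: "B > 0" unfolding B by simp
  have bd: "beta_density (k+1) (n-k+2) = (\<lambda>z. z^(Suc m) * (1-z)^(Suc p) / B)"
    unfolding beta_density_def B_def k nn by (auto simp: numeral_eq_Suc)
  have D: "((\<lambda>z. z^(Suc m) * (1-z)^(Suc p) / B) has_real_derivative
     (Suc m * z^m * (1-z)^(Suc p) - z^Suc m * Suc p * (1-z)^p)/B) (at z)"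
  proof (rule DERIV_cdivide)
    show "((\<lambda>z. z^(Suc m) * (1-z)^(Suc p)) has_real_derivative
     (Suc m * z^m * (1-z)^(Suc p) - z^Suc m * Suc p * (1-z)^p)) (at z)"
      by (rule derivative_eq_intros refl | simp)+
  qed
  have c1: "real (Suc m) / B = (real n+1)*(real n+2)* real (n choose m)"
  proof -
    have b: "real (n choose m) = fact n / (fact m * fact (Suc p))"
      using binomial_fact[of m n] by (simp add: nn)
    have fm: "B = real (Suc m) * (fact m * fact (Suc p)) / fact (n+2)"
      unfolding B by (simp only: fact_Suc of_nat_mult mult.assoc)
    have "real (Suc m) / B = fact (n+2) / (fact m * fact (Suc p))"
      unfolding fm by (rule aux) auto
    then show ?thesis unfolding b f3 by simp
  qed
  have c2: "real (Suc p) / B = (real n+1)*(real n+2)* real (n choose Suc m)"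
  proof -
    have b: "real (n choose Suc m) = fact n / (fact (Suc m) * fact p)"
      using binomial_fact[of "Suc m" n] by (simp add: nn)
    have fm: "B = real (Suc p) * (fact (Suc m) * fact p) / fact (n+2)"
      unfolding B by (simp only: fact_Suc[of p] of_nat_mult mult.assoc mult.left_commute)
    have "real (Suc p) / B = fact (n+2) / (fact (Suc m) * fact p)"
      unfolding fm by (rule aux) auto
    then show ?thesis unfolding b f3 by simp
  qed
  have "deriv (beta_density (k+1) (n-k+2)) z =
     (Suc m * z^m * (1-z)^(Suc p) - z^Suc m * Suc p * (1-z)^p)/B"
    unfolding bd using D by (rule DERIV_imp_deriv)
  also have "\<dots> = (real (Suc m)/B) * z^m * (1-z)^(Suc p) - (real (Suc p) / B) * z^Suc m * (1-z)^p"
    by (simp add: diff_divide_distrib)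
  also have "\<dots> = (real n+1)*(real n+2)*(real (n choose (k-1)) * z^(k-1)*(1-z)^(n-k+1)
       - real (n choose k) * z^k*(1-z)^(n-k))"
    unfolding c1 c2 by (simp add: k nn algebra_simps)
  finally show ?thesis .
qed

lemma Q_nonzero:
  assumes "1 \<le> k" "k \<le> n" "c \<noteq> 0"
  shows "- (real n+1)*(real n+2)*(real (n choose k)*a^k*(c-a)^(n-k)
      - real (n choose (k-1))*a^(k-1)*(c-a)^(n-k+1))
    = c^n * deriv (beta_density (k+1) (n-k+2)) (a/c)"
proof -
  obtain m where k: "k = Suc m" using assms by (cases k) auto
  obtain p where nn: "n = Suc m + p" using assms k le_iff_add by blast
  have e1: "c^n * ((a/c)^m * (1-a/c)^(Suc p)) = a^m * (c-a)^(Suc p)"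
  proof -
    have "c^n = c^m * c^(Suc p)" by (simp add: nn power_add)
    moreover have "c^m * (a/c)^m = a^m" using assms(3) by (simp add: power_divide)
    moreover have "c^(Suc p) * (1-a/c)^(Suc p) = (c-a)^(Suc p)"
      using assms(3) by (simp add: power_mult_distrib[symmetric] algebra_simps)
    ultimately show ?thesis by (metis mult.assoc mult.commute)
  qed
  have e2: "c^n * ((a/c)^(Suc m) * (1-a/c)^p) = a^(Suc m) * (c-a)^p"
  proof -
    have "c^n = c^(Suc m) * c^p" by (simp add: nn power_add)
    moreover have "c^(Suc m) * (a/c)^(Suc m) = a^(Suc m)" using assms(3) by (simp add: power_divide)
    moreover have "c^p * (1-a/c)^p = (c-a)^p"
      using assms(3) by (simp add: power_mult_distrib[symmetric] algebra_simps)
    ultimately show ?thesis by (metis mult.assoc mult.commute)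
  qed
  have x: "n - k = p" "n - k + 1 = Suc p" "k - 1 = m" "n - Suc m = p" by (simp_all add: k nn)
  define X where "X = real (n choose m)"
  define Y where "Y = real (n choose Suc m)"
  have "c^n * deriv (beta_density (k+1) (n-k+2)) (a/c) =
     c^n * ((real n+1)*(real n+2)*(X * (a/c)^m*(1-(a/c))^(Suc p)
       - Y * (a/c)^(Suc m)*(1-(a/c))^p))"
    apply (subst beta_deriv[OF assms(1,2)]) unfolding x X_def Y_def k by simp
  also have "\<dots> = (real n+1)*(real n+2)*(X * (c^n * ((a/c)^m*(1-a/c)^(Suc p)))
       - Y * (c^n * ((a/c)^(Suc m)*(1-a/c)^p)))"
    by (simp only: algebra_simps)
  also have "\<dots> = (real n+1)*(real n+2)*(X * (a^m * (c-a)^(Suc p)) - Y * (a^(Suc m) * (c-a)^p))"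
    unfolding e1 e2 ..
  finally have R: "c^n * deriv (beta_density (k+1) (n-k+2)) (a/c) = (real n+1)*(real n+2)*(X * (a^m * (c-a)^(Suc p)) - Y * (a^(Suc m) * (c-a)^p))" .
  show ?thesis unfolding R unfolding x(1) x(3) unfolding k X_def Y_def by (simp add: algebra_simps)
qed

lemma Q_zero:
  assumes "1 \<le> k" "k \<le> n"
  shows "- (real n+1)*(real n+2)*(real (n choose k)*a^k*(0-a)^(n-k)
      - real (n choose (k-1))*a^(k-1)*(0-a)^(n-k+1))
    = (-1) ^ (n - k + 1) * (real n + 1) *
         (Gamma (real n + 3) / (Gamma (real k + 1) * Gamma (real n - real k + 2))) * a^n"
proof -
  obtain m where k: "k = Suc m" using assms by (cases k) auto
  obtain p where nn: "n = Suc m + p" using assms k le_iff_add by blast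
  have g1: "Gamma (real n + 3) = fact (n+2)"
  proof -
    have "real n + 3 = real (n+2) + 1" by simp
    then show ?thesis by (simp only: Gamma_nat1)
  qed
  have g2: "Gamma (real n - real k + 2) = fact (Suc p)"
  proof -
    have "real n - real k + 2 = real (Suc p) + 1" by (simp add: nn k)
    then show ?thesis by (simp only: Gamma_nat1)
  qed
  have g3: "Gamma (real k + 1) = fact k" by (rule Gamma_nat1)
  have f3: "(fact (n + 2) :: real) = (real n + 2) * (real n+1) * fact n"
    by (simp add: numeral_2_eq_2 fact_Suc algebra_simps)
  have bsum: "real (n choose k) + real (n choose (k-1)) = real (Suc n choose k)"
    by (simp add: k)
  have bf: "real (Suc n choose k) = fact (Suc n) / (fact k * fact (Suc p))"
    using binomial_fact[of k "Suc n"] by (simp add: nn k)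
  have G: "Gamma (real n + 3) / (Gamma (real k + 1) * Gamma (real n - real k + 2))
      = (real n + 2) * real (Suc n choose k)"
  proof -
    have fs: "(fact (Suc n)::real) = (real n + 1) * fact n" by simp
    show ?thesis unfolding g1 g2 g3 bf f3 fs by (simp add: field_simps del: fact_Suc)
  qed
  have pw1: "(0-a)^(n-k) = (-1)^p * a^p"
  proof -
    have "(0-a)^(n-k) = (-a)^p" by (simp add: nn k)
    also have "\<dots> = (-1)^p * a^p" by (rule power_minus)
    finally show ?thesis .
  qed
  have pw2: "(0-a)^(n-k+1) = - ((-1)^p * a^(Suc p))"
  proof -
    have "(0-a)^(n-k+1) = (-a)^(Suc p)" by (simp add: nn k)
    also have "\<dots> = (-1)^(Suc p) * a^(Suc p)" by (rule power_minus)
    also have "\<dots> = - ((-1)^p * a^(Suc p))" by simp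
    finally show ?thesis .
  qed
  have an: "a^n = a^m * a^(Suc p)" "a^n = a^(Suc m) * a^p" by (simp_all add: nn power_add)
  have x: "n - k + 1 = Suc p" "k - 1 = m" by (simp_all add: k nn)
  define X where "X = real (n choose k)"
  define Y where "Y = real (n choose m)"
  define sg where "sg = ((-1::real)^p)"
  have "- (real n+1)*(real n+2)*(real (n choose k)*a^k*(0-a)^(n-k)
      - real (n choose (k-1))*a^(k-1)*(0-a)^(n-k+1))
     = - (real n+1)*(real n+2)*(X*a^(Suc m)*(sg*a^p) - Y*a^m*(-(sg*a^(Suc p))))"
    unfolding pw1 pw2 unfolding x unfolding X_def Y_def sg_def k by simp
  also have "\<dots> = - (real n+1)*(real n+2) * sg * (X*(a^(Suc m)*a^p) + Y*(a^m*a^(Suc p)))"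
    by (simp add: algebra_simps)
  also have "\<dots> = - (real n+1)*(real n+2) * sg * (X+Y)*a^n"
    unfolding an[symmetric] by (simp add: algebra_simps)
  also have "\<dots> = (-1) ^ (n - k + 1) * (real n + 1) * ((real n + 2) * (X + Y)) * a^n"
    unfolding x sg_def by (simp add: algebra_simps)
  finally show ?thesis unfolding G bsum[symmetric] X_def Y_def x(2) .
qed


lemma sorted_count_less:
  fixes ys :: "real list"
  assumes "sorted ys" "1 \<le> j" "j \<le> length ys"
  shows "card {i. i < length ys \<and> ys ! i \<le> t} < j \<longleftrightarrow> t < ys ! (j - 1)"
proof
  assume "card {i. i < length ys \<and> ys ! i \<le> t} < j"
  show "t < ys ! (j - 1)"
  proof (rule ccontr)
    assume "\<not> t < ys ! (j - 1)"
    have "{..<j} \<subseteq> {i. i < length ys \<and> ys ! i \<le> t}"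
    proof
      fix i assume "i \<in> {..<j}"
      then have "i \<le> j - 1" "j - 1 < length ys" using assms by auto
      then have "ys ! i \<le> ys ! (j - 1)" using sorted_nth_mono[OF assms(1)] by blast
      with \<open>\<not> t < ys ! (j - 1)\<close> \<open>j - 1 < length ys\<close> \<open>i \<le> j - 1\<close>
      show "i \<in> {i. i < length ys \<and> ys ! i \<le> t}" by auto
    qed
    then have "card {..<j} \<le> card {i. i < length ys \<and> ys ! i \<le> t}"
      by (intro card_mono) auto
    with \<open>card _ < j\<close> show False by simp
  qed
next
  assume "t < ys ! (j - 1)"
  have "{i. i < length ys \<and> ys ! i \<le> t} \<subseteq> {..<j-1}"
  proof
    fix i assume i: "i \<in> {i. i < length ys \<and> ys ! i \<le> t}"
    show "i \<in> {..<j-1}"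
    proof (rule ccontr)
      assume "i \<notin> {..<j-1}"
      then have "j - 1 \<le> i" by auto
      then have "ys ! (j-1) \<le> ys ! i" using sorted_nth_mono[OF assms(1)] i by blast
      with i \<open>t < ys ! (j - 1)\<close> show False by auto
    qed
  qed
  then have "card {i. i < length ys \<and> ys ! i \<le> t} \<le> card {..<j-1}"
    by (intro card_mono) auto
  with assms show "card {i. i < length ys \<and> ys ! i \<le> t} < j" by simp
qed

lemma count_sort:
  fixes x :: "nat \<Rightarrow> real"
  shows "card {i. i < n \<and> x i \<le> t} =
    card {i. i < length (sort (map x [0..<n])) \<and> sort (map x [0..<n]) ! i \<le> t}"
proof -
  have "card {i. i < n \<and> x i \<le> t} = length (filter (\<lambda>v. v \<le> t) (map x [0..<n]))"
    unfolding length_filter_conv_card by (rule arg_cong[where f=card]) auto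
  also have "\<dots> = length (filter (\<lambda>v. v \<le> t) (sort (map x [0..<n])))"
    by (metis mset_filter mset_sort size_mset)
  also have "\<dots> = card {i. i < length (sort (map x [0..<n])) \<and> sort (map x [0..<n]) ! i \<le> t}"
    by (rule length_filter_conv_card)
  finally show ?thesis .
qed

lemma order_stat_count:
  fixes x :: "nat \<Rightarrow> real"
  assumes "1 \<le> j" "j \<le> n"
  shows "card {i. i < n \<and> x i \<le> t} < j \<longleftrightarrow> t < order_stat n x j"
proof -
  define ys where "ys = sort (map x [0..<n])"
  have len: "length ys = n" by (simp add: ys_def)
  have os: "order_stat n x j = ys ! (j - 1)" using assms by (simp add: order_stat_def ys_def)
  have "card {i. i < n \<and> x i \<le> t} < j \<longleftrightarrow> card {i. i < length ys \<and> ys ! i \<le> t} < j"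
    unfolding ys_def count_sort[of n x t] ..
  also have "\<dots> \<longleftrightarrow> t < ys ! (j - 1)"
    by (rule sorted_count_less) (use assms len in \<open>simp_all add: ys_def\<close>)
  finally show ?thesis unfolding os .
qed

lemma order_stat_range:
  fixes x :: "nat \<Rightarrow> real"
  assumes "1 \<le> j" "j \<le> n" "\<And>i. i < n \<Longrightarrow> x i \<in> {0..1}"
  shows "order_stat n x j \<in> {0..1}"
proof -
  have "sort (map x [0..<n]) ! (j-1) \<in> set (sort (map x [0..<n]))"
    using assms by (intro nth_mem) auto
  then show ?thesis using assms unfolding order_stat_def by auto
qed



definition U :: "real measure" where "U = restrict_space lborel {0..1}"

lemma space_U[simp]: "space U = {0..1}"
  by (simp add: U_def space_restrict_space)


lemma emeasure_U_space: "emeasure U (space U) = 1"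
  by (simp add: U_def emeasure_restrict_space)

lemma finite_measure_U: "finite_measure U"
  by (rule finite_measureI) (use emeasure_U_space in simp)

interpretation U: finite_measure U by (rule finite_measure_U)

lemma integral_U: fixes g :: "real \<Rightarrow> real" shows "integral\<^sup>L U g = (LINT y:{0..1}|lborel. g y)"
  unfolding U_def set_lebesgue_integral_def
  by (rule integral_restrict_space) simp

lemma measurable_U_iff: fixes g :: "real \<Rightarrow> real" shows "g \<in> borel_measurable U \<longleftrightarrow> (\<lambda>x. indicator {0..1} x *\<^sub>R g x) \<in> borel_measurable lborel"
  unfolding U_def by (rule borel_measurable_restrict_space_iff) simp

lemma integrable_U_iff: fixes g :: "real \<Rightarrow> real" shows "integrable U g \<longleftrightarrow> set_integrable lborel {0..1} g"
  unfolding U_def set_integrable_def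
  by (rule integrable_restrict_space) simp

lemma ident_U[measurable]: "(\<lambda>x. x) \<in> borel_measurable U"
  unfolding U_def by (rule measurable_restrict_space1) simp

definition hh :: "nat set \<Rightarrow> nat \<Rightarrow> real \<Rightarrow> real \<Rightarrow> real" where
  "hh S i s t = (if i \<in> S then (if s \<le> t then 1 else 0) else (if s \<le> t then 0 else 1))"

lemma hh_measurable[measurable]:
  assumes [measurable]: "f \<in> borel_measurable M" "g \<in> borel_measurable M"
  shows "(\<lambda>z. hh S i (f z) (g z)) \<in> borel_measurable M"
  unfolding hh_def by measurable

interpretation PU: product_sigma_finite "\<lambda>_::nat. U"
  by (simp add: product_sigma_finite_def U.sigma_finite_measure_axioms)

abbreviation CU :: "nat \<Rightarrow> (nat \<Rightarrow> real) measure" where "CU n \<equiv> PiM {..<n} (\<lambda>_. U)"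

lemma unit_cube_U: "unit_cube n = CU n" by (simp add: unit_cube_def U_def)

lemma sf_C: "sigma_finite_measure (CU n)"
  by (rule PU.sigma_finite) simp

lemma psf: "pair_sigma_finite (CU n) U"
  by (intro pair_sigma_finite.intro sf_C U.sigma_finite_measure_axioms)

lemma space_CU: "x \<in> space (CU n) \<Longrightarrow> i < n \<Longrightarrow> x i \<in> {0..1}"
proof -
  assume x: "x \<in> space (CU n)" and i: "i < n"
  have "x \<in> (\<Pi>\<^sub>E i\<in>{..<n}. space U)" using x by (simp only: space_PiM)
  moreover have "i \<in> {..<n}" using i by simp
  ultimately have "x i \<in> space U" by (rule PiE_mem)
  then show "x i \<in> {0..1}" by (simp only: space_U)
qed

lemma prod_hh:
  assumes "S \<subseteq> {..<n}"
  shows "(\<Prod>i<n. hh S i (x i) t) = (if S = {i. i < n \<and> x i \<le> t} then 1 else 0)"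
proof (cases "S = {i. i < n \<and> x i \<le> t}")
  case True
  then show ?thesis by (auto simp: hh_def intro!: prod.neutral)
next
  case False
  then obtain i where i: "i < n" "(i \<in> S) \<noteq> (x i \<le> t)" using assms by auto
  then have "hh S i (x i) t = 0" by (auto simp: hh_def)
  then have "(\<Prod>i<n. hh S i (x i) t) = 0" using i by (intro prod_zero) auto
  then show ?thesis using False by simp
qed

lemma expand:
  fixes \<phi> :: "real \<Rightarrow> real"
  shows "(\<Prod>i<n. \<phi> (x i)) * (if card {i. i < n \<and> x i \<le> t} < j then 1 else 0)
    = (\<Sum>S\<in>{S. S \<subseteq> {..<n} \<and> card S < j}. \<Prod>i<n. \<phi> (x i) * hh S i (x i) t)"
proof -
  have fin: "finite {S. S \<subseteq> {..<n} \<and> card S < j}"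
    by (rule finite_subset[of _ "Pow {..<n}"]) auto
  have "(\<Sum>S\<in>{S. S \<subseteq> {..<n} \<and> card S < j}. \<Prod>i<n. \<phi> (x i) * hh S i (x i) t)
     = (\<Sum>S\<in>{S. S \<subseteq> {..<n} \<and> card S < j}. if S = {i. i < n \<and> x i \<le> t} then (\<Prod>i<n. \<phi> (x i)) else 0)"
    by (intro sum.cong refl) (simp add: prod.distrib prod_hh)
  also have "\<dots> = (if {i. i < n \<and> x i \<le> t} \<in> {S. S \<subseteq> {..<n} \<and> card S < j} then (\<Prod>i<n. \<phi> (x i)) else 0)"
    using fin by (rule sum.delta)
  finally show ?thesis by auto
qed

lemma measure_U_space: "measure U (space U) = 1"
  using emeasure_U_space by (simp add: measure_def)

lemma os_int:
  assumes x: "x \<in> space (CU n)" and j: "j \<le> n + 1"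
  shows "(\<integral>t. (if card {i. i < n \<and> x i \<le> t} < j then 1 else 0::real) \<partial>U) = order_stat n x j"
proof -
  consider "j = 0" | "1 \<le> j \<and> j \<le> n" | "j = n + 1" using j by linarith
  then show ?thesis
  proof cases
    case 1
    then show ?thesis by (simp add: order_stat_def)
  next
    case 3
    have "card {i. i < n \<and> x i \<le> t} \<le> n" for t
      using card_mono[of "{..<n}" "{i. i < n \<and> x i \<le> t}"] by auto
    then have "(\<integral>t. (if card {i. i < n \<and> x i \<le> t} < j then 1 else 0::real) \<partial>U) = (\<integral>t. 1 \<partial>U)"
      using 3 by (intro Bochner_Integration.integral_cong) (auto simp: less_Suc_eq_le)
    then show ?thesis using 3 measure_U_space by (simp add: order_stat_def)
  next
    case 2
    define y where "y = order_stat n x j"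
    have y: "y \<in> {0..1}" unfolding y_def
      using 2 space_CU[OF x] by (intro order_stat_range) auto
    have "(\<integral>t. (if card {i. i < n \<and> x i \<le> t} < j then 1 else 0::real) \<partial>U)
       = (\<integral>t. indicator {..<y} t \<partial>U)"
      using 2 by (intro Bochner_Integration.integral_cong) (auto simp: order_stat_count y_def indicator_def)
    also have "\<dots> = (\<integral>t. indicator {0..<y} t \<partial>lborel)"
      unfolding integral_U set_lebesgue_integral_def
      by (rule Bochner_Integration.integral_cong) (use y in \<open>auto simp: indicator_def\<close>)
    also have "\<dots> = y" using y by simp
    finally show ?thesis unfolding y_def .
  qed
qed

lemma group_card:
  fixes g :: "nat \<Rightarrow> real"
  assumes "finite A"
  shows "(\<Sum>S\<in>{S. S \<subseteq> A \<and> card S < j}. g (card S)) = (\<Sum>m<j. real (card A choose m) * g m)"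
proof -
  have fin: "finite {S. S \<subseteq> A \<and> card S < j}"
    by (rule finite_subset[of _ "Pow A"]) (use assms in auto)
  have "(\<Sum>S\<in>{S. S \<subseteq> A \<and> card S < j}. g (card S))
     = (\<Sum>m<j. \<Sum>S\<in>{S \<in> {S. S \<subseteq> A \<and> card S < j}. card S = m}. g (card S))"
    by (rule sum.group[symmetric]) (use fin in auto)
  also have "\<dots> = (\<Sum>m<j. real (card A choose m) * g m)"
  proof (rule sum.cong[OF refl])
    fix m assume "m \<in> {..<j}"
    then have e: "{S \<in> {S. S \<subseteq> A \<and> card S < j}. card S = m} = {S. S \<subseteq> A \<and> card S = m}" by auto
    show "(\<Sum>S\<in>{S \<in> {S. S \<subseteq> A \<and> card S < j}. card S = m}. g (card S)) = real (card A choose m) * g m"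
      unfolding e using n_subsets[OF assms, of m] by simp
  qed
  finally show ?thesis .
qed



locale P18 =
  fixes \<phi> \<Phi> :: "real \<Rightarrow> real" and n :: nat
  assumes meas: "set_borel_measurable lborel {0..1} \<phi>"
    and L2: "set_integrable lborel {0..1} (\<lambda>t. (\<phi> t)\<^sup>2)"
    and \<Phi>_def: "\<And>x. \<Phi> x = (LINT t:{0..x}|lborel. \<phi> t)"
begin

lemma phi_meas: "\<phi> \<in> borel_measurable U"
  using meas unfolding measurable_U_iff set_borel_measurable_def .

lemma phi_meas'[measurable]: "g \<in> measurable M U \<Longrightarrow> (\<lambda>x. \<phi> (g x)) \<in> borel_measurable M"
  by (rule measurable_compose[OF _ phi_meas])

lemma phi_int: "integrable U \<phi>"
proof (rule Bochner_Integration.integrable_bound)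
  have "integrable U (\<lambda>t. (\<phi> t)\<^sup>2)" using L2 unfolding integrable_U_iff .
  then show "integrable U (\<lambda>t. 1 + (\<phi> t)\<^sup>2)" by simp
  show "\<phi> \<in> borel_measurable U" by (rule phi_meas)
  show "AE x in U. norm (\<phi> x) \<le> norm (1 + (\<phi> x)\<^sup>2)"
  proof (rule AE_I2)
    fix x
    have "\<bar>\<phi> x\<bar> \<le> 1 + (\<phi> x)\<^sup>2"
    proof (cases "\<bar>\<phi> x\<bar> \<le> 1")
      case True
      then show ?thesis using zero_le_power2[of "\<phi> x"] by linarith
    next
      case False
      have "\<bar>\<phi> x\<bar> * 1 \<le> \<bar>\<phi> x\<bar> * \<bar>\<phi> x\<bar>"
        by (rule mult_left_mono) (use False in auto)
      moreover have "\<bar>\<phi> x\<bar> * \<bar>\<phi> x\<bar> = (\<phi> x)\<^sup>2"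
        by (simp add: power2_eq_square abs_mult_self_eq)
      ultimately show ?thesis by linarith
    qed
    then show "norm (\<phi> x) \<le> norm (1 + (\<phi> x)\<^sup>2)" by simp
  qed
qed

lemma phi_hh_int: "integrable U (\<lambda>s. \<phi> s * hh S i s t)"
proof (rule Bochner_Integration.integrable_bound[OF phi_int])
  show "(\<lambda>s. \<phi> s * hh S i s t) \<in> borel_measurable U" by measurable
  show "AE x in U. norm (\<phi> x * hh S i x t) \<le> norm (\<phi> x)"
    by (rule AE_I2) (simp add: hh_def abs_mult)
qed

lemma int_le: 
  assumes "t \<le> 1"
  shows "(\<integral>s. \<phi> s * (if s \<le> t then 1 else 0) \<partial>U) = \<Phi> t"
  unfolding integral_U \<Phi>_def set_lebesgue_integral_def
  by (rule Bochner_Integration.integral_cong) (use assms in \<open>auto simp: indicator_def\<close>)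

lemma int_all: "(\<integral>s. \<phi> s \<partial>U) = \<Phi> 1"
proof -
  have "(\<integral>s. \<phi> s \<partial>U) = (\<integral>s. \<phi> s * (if s \<le> 1 then 1 else 0) \<partial>U)"
    by (rule Bochner_Integration.integral_cong) auto
  then show ?thesis using int_le[of 1] by simp
qed

lemma int_hh:
  assumes "t \<le> 1"
  shows "(\<integral>s. \<phi> s * hh S i s t \<partial>U) = (if i \<in> S then \<Phi> t else \<Phi> 1 - \<Phi> t)"
proof (cases "i \<in> S")
  case True
  then show ?thesis using int_le[OF assms] by (simp add: hh_def)
next
  case False
  have "(\<integral>s. \<phi> s * hh S i s t \<partial>U) = (\<integral>s. \<phi> s - \<phi> s * (if s \<le> t then 1 else 0) \<partial>U)"
    using False by (intro Bochner_Integration.integral_cong) (auto simp: hh_def)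
  also have "\<dots> = \<Phi> 1 - \<Phi> t"
    using phi_hh_int[of "{i}" i t] phi_int int_le[OF assms] int_all
    by (subst Bochner_Integration.integral_diff) (auto simp: hh_def)
  finally show ?thesis using False by simp
qed

lemma prod_int:
  assumes "S \<subseteq> {..<n}" "t \<le> 1"
  shows "(\<integral>x. (\<Prod>i<n. \<phi> (x i) * hh S i (x i) t) \<partial>CU n) = \<Phi> t ^ card S * (\<Phi> 1 - \<Phi> t) ^ (n - card S)"
proof -
  have "(\<integral>x. (\<Prod>i<n. \<phi> (x i) * hh S i (x i) t) \<partial>CU n) = (\<Prod>i<n. \<integral>s. \<phi> s * hh S i s t \<partial>U)"
    by (rule PU.product_integral_prod) (auto intro: phi_hh_int)
  also have "\<dots> = (\<Prod>i<n. if i \<in> S then \<Phi> t else \<Phi> 1 - \<Phi> t)"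
    using assms(2) by (simp add: int_hh)
  also have "\<dots> = \<Phi> t ^ card S * (\<Phi> 1 - \<Phi> t) ^ (n - card S)"
  proof -
    have a: "{..<n} \<inter> S = S" using assms(1) by auto
    have b: "card ({..<n} \<inter> - S) = n - card S"
    proof -
      have "{..<n} \<inter> - S = {..<n} - S" by auto
      then show ?thesis using assms(1) by (simp add: card_Diff_subset finite_subset)
    qed
    show ?thesis by (simp add: prod.If_cases a b)
  qed
  finally show ?thesis .
qed

definition f :: "(nat \<Rightarrow> real) \<Rightarrow> real" where "f x = (\<Prod>i<n. \<phi> (x i))"
definition Pj :: "nat \<Rightarrow> nat set set" where "Pj j = {S. S \<subseteq> {..<n} \<and> card S < j}"
definition F :: "nat \<Rightarrow> (nat \<Rightarrow> real) \<Rightarrow> real \<Rightarrow> real" where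
  "F j x t = (\<Sum>S\<in>Pj j. \<Prod>i<n. \<phi> (x i) * hh S i (x i) t)"
definition P :: "nat \<Rightarrow> real \<Rightarrow> real" where
  "P j t = (\<Sum>S\<in>Pj j. \<Phi> t ^ card S * (\<Phi> 1 - \<Phi> t) ^ (n - card S))"

lemma F_expand: "F j x t = f x * (if card {i. i < n \<and> x i \<le> t} < j then 1 else 0)"
  unfolding F_def f_def Pj_def by (rule expand[symmetric])

lemma F_meas: "(\<lambda>z. F j (fst z) (snd z)) \<in> borel_measurable (CU n \<Otimes>\<^sub>M U)"
  unfolding F_def by measurable

lemma f_int: "integrable (CU n) f"
  unfolding f_def by (rule PU.product_integrable_prod) (auto intro: phi_int)

lemma f_meas: "f \<in> borel_measurable (CU n)"
  using f_int by auto

lemma fC_int: "integrable (CU n \<Otimes>\<^sub>M U) (\<lambda>z. f (fst z))"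
  unfolding integrable_iff_bounded
proof
  show "(\<lambda>z. f (fst z)) \<in> borel_measurable (CU n \<Otimes>\<^sub>M U)"
    using f_meas by measurable
  have "(\<integral>\<^sup>+ z. ennreal (norm (f (fst z))) \<partial>(CU n \<Otimes>\<^sub>M U))
      = (\<integral>\<^sup>+ x. \<integral>\<^sup>+ t. ennreal (norm (f (fst (x, t)))) \<partial>U \<partial>CU n)"
    by (rule U.nn_integral_fst[symmetric]) (use f_meas in measurable)
  also have "\<dots> = (\<integral>\<^sup>+ x. ennreal (norm (f x)) \<partial>CU n)"
    using emeasure_U_space by simp
  also have "\<dots> < \<infinity>" using f_int unfolding integrable_iff_bounded by simp
  finally show "(\<integral>\<^sup>+ z. ennreal (norm (f (fst z))) \<partial>(CU n \<Otimes>\<^sub>M U)) < \<infinity>" .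
qed

lemma F_int: "integrable (CU n \<Otimes>\<^sub>M U) (\<lambda>z. F j (fst z) (snd z))"
proof (rule Bochner_Integration.integrable_bound[OF fC_int F_meas])
  show "AE z in CU n \<Otimes>\<^sub>M U. norm (F j (fst z) (snd z)) \<le> norm (f (fst z))"
    by (rule AE_I2) (simp add: F_expand abs_mult)
qed

lemma E:
  assumes j: "j \<le> n + 1"
  shows "integrable (CU n) (\<lambda>x. f x * order_stat n x j)"
    and "integrable U (P j)"
    and "(\<integral>x. f x * order_stat n x j \<partial>CU n) = (\<integral>t. P j t \<partial>U)"
proof -
  interpret pair_sigma_finite "CU n" U by (rule psf)
  have int: "integrable (CU n \<Otimes>\<^sub>M U) (case_prod (F j))"
    using F_int unfolding case_prod_beta' .
  have in1: "(\<integral>t. F j x t \<partial>U) = f x * order_stat n x j" if "x \<in> space (CU n)" for x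
    unfolding F_expand using os_int[OF that j] by simp
  have in2: "(\<integral>x. F j x t \<partial>CU n) = P j t" if "t \<in> space U" for t
  proof -
    have "(\<integral>x. F j x t \<partial>CU n) = (\<Sum>S\<in>Pj j. (\<integral>x. (\<Prod>i<n. \<phi> (x i) * hh S i (x i) t) \<partial>CU n))"
      unfolding F_def
      by (rule Bochner_Integration.integral_sum, rule PU.product_integrable_prod) (auto intro: phi_hh_int)
    also have "\<dots> = P j t"
      unfolding P_def using that by (intro sum.cong refl prod_int) (auto simp: Pj_def)
    finally show ?thesis .
  qed
  have i1: "integrable (CU n) (\<lambda>x. \<integral>t. F j x t \<partial>U)"
    using integrable_fst'[OF int] by simp
  show "integrable (CU n) (\<lambda>x. f x * order_stat n x j)"
  proof -
    have "integrable (CU n) (\<lambda>x. \<integral>t. F j x t \<partial>U) \<longleftrightarrow> integrable (CU n) (\<lambda>x. f x * order_stat n x j)"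
      by (rule Bochner_Integration.integrable_cong) (auto simp: in1)
    then show ?thesis using i1 by simp
  qed
  have i2: "integrable U (\<lambda>t. \<integral>x. F j x t \<partial>CU n)"
    using integrable_snd[OF int] .
  show "integrable U (P j)"
  proof -
    have "integrable U (\<lambda>t. \<integral>x. F j x t \<partial>CU n) \<longleftrightarrow> integrable U (P j)"
      by (rule Bochner_Integration.integrable_cong) (auto simp: in2)
    then show ?thesis using i2 by simp
  qed
  have "(\<integral>x. f x * order_stat n x j \<partial>CU n) = (\<integral>x. (\<integral>t. F j x t \<partial>U) \<partial>CU n)"
    by (rule Bochner_Integration.integral_cong) (auto simp: in1)
  also have "\<dots> = integral\<^sup>L (CU n \<Otimes>\<^sub>M U) (case_prod (F j))"
    using integral_fst'[OF int] by simp
  also have "\<dots> = (\<integral>t. (\<integral>x. F j x t \<partial>CU n) \<partial>U)"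
    using integral_snd[OF int] by simp
  also have "\<dots> = (\<integral>t. P j t \<partial>U)"
    by (rule Bochner_Integration.integral_cong) (auto simp: in2)
  finally show "(\<integral>x. f x * order_stat n x j \<partial>CU n) = (\<integral>t. P j t \<partial>U)" .
qed

lemma P_sum: "P j t = (\<Sum>m<j. real (n choose m) * (\<Phi> t ^ m * (\<Phi> 1 - \<Phi> t) ^ (n - m)))"
  unfolding P_def Pj_def using group_card[of "{..<n}" "\<lambda>m. \<Phi> t ^ m * (\<Phi> 1 - \<Phi> t) ^ (n - m)" j]
  by simp

lemma P_diff:
  assumes "1 \<le> k" "k \<le> n"
  shows "P (k+1) t - 2 * P k t + P (k-1) t =
    real (n choose k)*\<Phi> t^k*(\<Phi> 1-\<Phi> t)^(n-k) - real (n choose (k-1))*\<Phi> t^(k-1)*(\<Phi> 1-\<Phi> t)^(n-k+1)"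
proof -
  obtain m where k: "k = Suc m" using assms by (cases k) auto
  have nm: "n - m = n - k + 1" using assms k by simp
  show ?thesis unfolding P_sum k by (simp add: nm k)
qed

end

theorem proposition18:
  fixes n k :: nat and \<phi> \<Phi> :: "real \<Rightarrow> real"
  assumes n: "n \<ge> 1"
    and meas: "set_borel_measurable lborel {0..1} \<phi>"
    and L2: "set_integrable lborel {0..1} (\<lambda>t. (\<phi> t)\<^sup>2)"
    and \<Phi>_def: "\<And>x. \<Phi> x = (LINT t:{0..x}|lborel. \<phi> t)"
    and k: "k \<in> {1..n}"
  shows "influence_index n (\<lambda>x. \<Prod>i<n. \<phi> (x i)) k =
    (if \<Phi> 1 \<noteq> 0 then
       \<Phi> 1 ^ n * (LINT y:{0..1}|lborel.
          deriv (beta_density (k + 1) (n - k + 2)) (\<Phi> y / \<Phi> 1))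
     else
       (-1) ^ (n - k + 1) * (real n + 1) *
         (Gamma (real n + 3) / (Gamma (real k + 1) * Gamma (real n - real k + 2))) *
         (LINT y:{0..1}|lborel. (\<Phi> y) ^ n))"
proof -
  interpret P18 \<phi> \<Phi> n using meas L2 \<Phi>_def by unfold_locales
  have k1: "1 \<le> k" "k \<le> n" using k by auto
  have fx: "(\<lambda>x. \<Prod>i<n. \<phi> (x i)) = f" by (simp add: f_def fun_eq_iff)
  define os where "os j x = order_stat n x j" for j x
  have iA: "integrable (CU n) (\<lambda>x. f x * os (k+1) x)" using E(1)[of "k+1"] k1 by (simp add: os_def)
  have iB: "integrable (CU n) (\<lambda>x. f x * os k x)" using E(1)[of "k"] k1 by (simp add: os_def)
  have iC: "integrable (CU n) (\<lambda>x. f x * os (k-1) x)" using E(1)[of "k-1"] k1 by (simp add: os_def)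
  have jA: "integrable U (P (k+1))" using E(2)[of "k+1"] k1 by simp
  have jB: "integrable U (P k)" using E(2)[of "k"] k1 by simp
  have jC: "integrable U (P (k-1))" using E(2)[of "k-1"] k1 by simp
  have eA: "(\<integral>x. f x * os (k+1) x \<partial>CU n) = (\<integral>t. P (k+1) t \<partial>U)" using E(3)[of "k+1"] k1 by (simp add: os_def)
  have eB: "(\<integral>x. f x * os k x \<partial>CU n) = (\<integral>t. P k t \<partial>U)" using E(3)[of "k"] k1 by (simp add: os_def)
  have eC: "(\<integral>x. f x * os (k-1) x \<partial>CU n) = (\<integral>t. P (k-1) t \<partial>U)" using E(3)[of "k-1"] k1 by (simp add: os_def)
  define D where "D t = real (n choose k)*\<Phi> t^k*(\<Phi> 1-\<Phi> t)^(n-k) - real (n choose (k-1))*\<Phi> t^(k-1)*(\<Phi> 1-\<Phi> t)^(n-k+1)" for t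
  have "(\<integral>x. f x * (os (k+1) x - 2 * os k x + os (k-1) x) \<partial>CU n)
      = (\<integral>x. (f x * os (k+1) x - 2 * (f x * os k x)) + f x * os (k-1) x \<partial>CU n)"
    by (rule Bochner_Integration.integral_cong) (simp_all add: algebra_simps)
  also have "\<dots> = (\<integral>x. f x * os (k+1) x \<partial>CU n) - 2 * (\<integral>x. f x * os k x \<partial>CU n) + (\<integral>x. f x * os (k-1) x \<partial>CU n)"
    using iA iB iC by (simp add: Bochner_Integration.integral_add Bochner_Integration.integral_diff)
  also have "\<dots> = (\<integral>t. P (k+1) t \<partial>U) - 2 * (\<integral>t. P k t \<partial>U) + (\<integral>t. P (k-1) t \<partial>U)"
    unfolding eA eB eC ..
  also have "\<dots> = (\<integral>t. (P (k+1) t - 2 * P k t) + P (k-1) t \<partial>U)"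
    using jA jB jC by (simp add: Bochner_Integration.integral_add Bochner_Integration.integral_diff)
  also have "\<dots> = (\<integral>t. D t \<partial>U)"
    unfolding D_def using P_diff[OF k1] by simp
  finally have main: "influence_index n f k = - (real n + 1) * (real n + 2) * (\<integral>t. D t \<partial>U)"
    unfolding influence_index_def unit_cube_U os_def by simp
  show ?thesis
  proof (cases "\<Phi> 1 = 0")
    case False
    have "- (real n + 1) * (real n + 2) * (\<integral>t. D t \<partial>U) = (\<integral>t. - (real n + 1) * (real n + 2) * D t \<partial>U)"
      by simp
    also have "\<dots> = (\<integral>t. \<Phi> 1 ^ n * deriv (beta_density (k + 1) (n - k + 2)) (\<Phi> t / \<Phi> 1) \<partial>U)"
      unfolding D_def using Q_nonzero[OF k1 False] by simp
    also have "\<dots> = \<Phi> 1 ^ n * (LINT y:{0..1}|lborel. deriv (beta_density (k + 1) (n - k + 2)) (\<Phi> y / \<Phi> 1))"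
      unfolding integral_U[symmetric] by simp
    finally show ?thesis using False main fx by simp
  next
    case True
    have "- (real n + 1) * (real n + 2) * (\<integral>t. D t \<partial>U) = (\<integral>t. - (real n + 1) * (real n + 2) * D t \<partial>U)"
      by simp
    also have "\<dots> = (\<integral>t. (-1) ^ (n - k + 1) * (real n + 1) *
         (Gamma (real n + 3) / (Gamma (real k + 1) * Gamma (real n - real k + 2))) * \<Phi> t ^ n \<partial>U)"
      unfolding D_def True using Q_zero[OF k1] by simp
    also have "\<dots> = (-1) ^ (n - k + 1) * (real n + 1) *
         (Gamma (real n + 3) / (Gamma (real k + 1) * Gamma (real n - real k + 2))) * (LINT y:{0..1}|lborel. (\<Phi> y) ^ n)"
      unfolding integral_U[symmetric] by simp
    finally show ?thesis using True main fx by simp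
  qed
qed

end
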